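(* Let $X_1,X_2,\dots$ be i.i.d. from an unknown law $P_0$ on $\mathbb{R}^p$. For a variational parameter $\phi$ in a parameter set $\Phi$, define the observable law $$P_\phi(x)=\iint P(x\mid z;\theta)\,\pi_Z(z)\,q_\phi(\theta)\,dz\,d\theta,$$ the profiled criterion $$m(x;\phi)=\sup_{z\in\mathbb{R}^{d_z}}\Big\{\mathbb{E}_{q_\phi(\theta)}[\log P(x\mid z;\theta)]+\log\pi_Z(z)\Big\},$$ the population objective $\widetilde{\mathcal{J}}(\phi)=\mathbb{E}_{P_0}[m(X;\phi)]-\mathrm{KL}(q_\phi\|\pi_\theta)$ and the empirical objective $\widetilde{\mathcal{J}}_N(\phi)=\frac1N\sum_{i=1}^N m(X_i;\phi)-\mathrm{KL}(q_\phi\|\pi_\theta)$. Let $\Phi^\star=\arg\max_{\phi\in\Phi}\widetilde{\mathcal{J}}(\phi)$, and assume all $\phi\in\Phi^\star$ induce the same observable law, denoted $P^\star$. Let $\Phi_1\subseteq\Phi_2\subseteq\cdots\subseteq\Phi$ be a sieve with $\bigcup_N\Phi_N$ dense in $\Phi$, and let $\hat\phi_N\in\Phi_N$ be the fitted parameter at sample size $N$, with algorithmic suboptimality $\delta_N^{\mathrm{alg}}=\sup_{\phi\in\Phi_N}\widetilde{\mathcal{J}}_N(\phi)-\widetilde{\mathcal{J}}_N(\hat\phi_N)$. Let $d$ be the bounded-Lipschitz distance $$d(P,Q)=\sup_{\|f\|_\infty\le1,\ \mathrm{Lip}(f)\le1}\Big|\int f\,dP-\int f\,dQ\Big|.$$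 Assume: (i) $\omega_N:=\sup_{\phi\in\Phi_N}|\widetilde{\mathcal{J}}_N(\phi)-\widetilde{\mathcal{J}}(\phi)|\to0$ in probability; (ii) $\delta_N^{\mathrm{alg}}\to0$ in probability; (iii) $r_N:=\sup_{\phi\in\Phi}\widetilde{\mathcal{J}}(\phi)-\sup_{\phi\in\Phi_N}\widetilde{\mathcal{J}}(\phi)\to0$; (iv) for every $\varepsilon>0$, $\Delta(\varepsilon):=\sup_{\phi\in\Phi}\widetilde{\mathcal{J}}(\phi)-\sup_{\phi:\,d(P_\phi,P^\star)\ge\varepsilon}\widetilde{\mathcal{J}}(\phi)>0$. Then $d(P_{\hat\phi_N},P^\star)\to0$ in probability. In particular, if the model is well specified, i.e. $P^\star=P_0$, then $d(P_{\hat\phi_N},P_0)\to0$ in probability.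
   Context: $\pi_Z$ is the standard Gaussian prior on $\mathbb{R}^{d_z}$; $\pi_\theta$ is a Gaussian prior on the parameters $\theta$ of a neural network that outputs a mean vector $\mu(z)$ and diagonal variances $\sigma_1^2(z),\dots,\sigma_p^2(z)$; $P(x\mid z;\theta)=\mathcal{N}(\mu(z),\mathrm{diag}(\sigma_1^2(z),\dots,\sigma_p^2(z)))$; $q_\phi(\theta)=\mathcal{N}(\theta\mid\mu_\phi,\mathrm{diag}(\sigma_\phi^2))$ is a Gaussian variational distribution with parameters $\phi=(\mu_\phi,\sigma_\phi^2)$. The sieve sets $\Phi_N$ restrict weight norms and spectral norms and enforce a floor and ceiling on the variances. *)

theory Defs
  imports "HOL-Probability.Probability"
begin

definition BL_dist :: "'x::metric_space measure \<Rightarrow> 'x measure \<Rightarrow> real" where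
  "BL_dist P Q =
     (SUP f \<in> {f :: 'x \<Rightarrow> real. (\<forall>x. \<bar>f x\<bar> \<le> 1) \<and> (\<forall>x y. \<bar>f x - f y\<bar> \<le> dist x y)}.
        \<bar>(\<integral>x. f x \<partial>P) - (\<integral>x. f x \<partial>Q)\<bar>)"

text \<open>Convergence to 0 in (outer) probability of an extended-real valued sequence of
  random quantities: for all eps, eta > 0, eventually the event Y_N > eps is covered by a
  measurable event of probability less than eta.  (Outer probability avoids measurability
  issues of suprema over uncountable parameter sets.)\<close>
definition tendsto_zero_in_outer_prob :: "'a measure \<Rightarrow> (nat \<Rightarrow> 'a \<Rightarrow> ereal) \<Rightarrow> bool" where
  "tendsto_zero_in_outer_prob M Y \<longleftrightarrow>
     (\<forall>\<epsilon>>0. \<forall>\<eta>>0. eventually (\<lambda>N. \<exists>A \<in> sets M.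
        {\<omega> \<in> space M. \<bar>Y N \<omega>\<bar> > ereal \<epsilon>} \<subseteq> A \<and> measure M A < \<eta>) sequentially)"

definition pop_obj :: "'x measure \<Rightarrow> ('x \<Rightarrow> 'phi \<Rightarrow> real) \<Rightarrow> ('phi \<Rightarrow> real) \<Rightarrow> 'phi \<Rightarrow> real" where
  "pop_obj P0 m KL \<phi> = (\<integral>x. m x \<phi> \<partial>P0) - KL \<phi>"

text \<open>Empirical objective  J_N(phi) = (1/N) sum_{i=1}^N m(X_i;phi) - KL;
  the sample X_1..X_N is represented as X 0, ..., X (N-1).\<close>
definition emp_obj :: "(nat \<Rightarrow> 'a \<Rightarrow> 'x) \<Rightarrow> ('x \<Rightarrow> 'phi \<Rightarrow> real) \<Rightarrow> ('phi \<Rightarrow> real)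
                       \<Rightarrow> nat \<Rightarrow> 'a \<Rightarrow> 'phi \<Rightarrow> real" where
  "emp_obj X m KL N \<omega> \<phi> = (\<Sum>i<N. m (X i \<omega>) \<phi>) / real N - KL \<phi>"

definition argmax_set :: "('phi \<Rightarrow> real) \<Rightarrow> 'phi set \<Rightarrow> 'phi set" where
  "argmax_set J \<Phi> = {\<phi> \<in> \<Phi>. \<forall>\<psi> \<in> \<Phi>. J \<psi> \<le> J \<phi>}"

end

theory Submission
  imports Defs
begin


lemma core:
  fixes J :: "'phi \<Rightarrow> real" and Jn :: "'phi \<Rightarrow> real"
  assumes phi0: "qz \<in> \<Phi>" "\<And>\<psi>. \<psi> \<in> \<Phi> \<Longrightarrow> J \<psi> \<le> J qz"
    and sub: "\<Psi> \<subseteq> \<Phi>" and ph: "p \<in> \<Psi>"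
    and Y1: "(SUP \<phi> \<in> \<Psi>. ereal \<bar>Jn \<phi> - J \<phi>\<bar>) \<le> ereal c"
    and Y2: "(SUP \<phi> \<in> \<Psi>. ereal (Jn \<phi>)) - ereal (Jn p) \<le> ereal c"
    and Y3: "(SUP \<phi> \<in> \<Phi>. ereal (J \<phi>)) - (SUP \<phi> \<in> \<Psi>. ereal (J \<phi>)) < ereal c"
    and Y4: "ereal (4*c) < (SUP \<phi> \<in> \<Phi>. ereal (J \<phi>)) - (SUP \<phi> \<in> {\<phi> \<in> \<Phi>. D \<phi> \<ge> \<epsilon>}. ereal (J \<phi>))"
    and Dp: "D p \<ge> \<epsilon>"
  shows False
proof -
  have S: "(SUP \<phi> \<in> \<Phi>. ereal (J \<phi>)) = ereal (J qz)"
    by (rule antisym) (auto intro!: SUP_least SUP_upper2[OF phi0(1)] simp: phi0)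
  have pP: "p \<in> \<Phi>" using sub ph by blast
  have a1: "\<bar>Jn \<phi> - J \<phi>\<bar> \<le> c" if "\<phi> \<in> \<Psi>" for \<phi>
  proof -
    have "ereal \<bar>Jn \<phi> - J \<phi>\<bar> \<le> (SUP \<phi> \<in> \<Psi>. ereal \<bar>Jn \<phi> - J \<phi>\<bar>)" by (rule SUP_upper[OF that])
    then have "ereal \<bar>Jn \<phi> - J \<phi>\<bar> \<le> ereal c" using Y1 by (rule order_trans)
    then show ?thesis by simp
  qed
  have Elo: "ereal (Jn p) \<le> (SUP \<phi> \<in> \<Psi>. ereal (Jn \<phi>))" by (rule SUP_upper[OF ph])
  then obtain e where E: "(SUP \<phi> \<in> \<Psi>. ereal (Jn \<phi>)) = ereal e"
    using Y2 by (cases "(SUP \<phi> \<in> \<Psi>. ereal (Jn \<phi>))") auto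
  have ea: "e - Jn p \<le> c" using Y2 E by simp
  have jn: "Jn \<phi> \<le> e" if "\<phi> \<in> \<Psi>" for \<phi>
    using SUP_upper[OF that, of "\<lambda>\<phi>. ereal (Jn \<phi>)"] E by simp
  have SN: "(SUP \<phi> \<in> \<Psi>. ereal (J \<phi>)) \<le> ereal (J p + 3*c)"
  proof (rule SUP_least)
    fix \<phi> assume "\<phi> \<in> \<Psi>"
    then have "J \<phi> \<le> J p + 3*c" using a1[of \<phi>] a1[OF ph] jn[of \<phi>] ea by (auto simp: abs_le_iff)
    then show "ereal (J \<phi>) \<le> ereal (J p + 3*c)" by simp
  qed
  have "ereal (J qz) - ereal (J p + 3*c) \<le> ereal (J qz) - (SUP \<phi> \<in> \<Psi>. ereal (J \<phi>))"
    using SN by (intro ereal_minus_mono) auto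
  with Y3 S have "ereal (J qz) - ereal (J p + 3*c) < ereal c" by (metis order_le_less_trans)
  then have h1: "J qz - J p - 3*c < c" by simp
  have Tlo: "ereal (J p) \<le> (SUP \<phi> \<in> {\<phi> \<in> \<Phi>. D \<phi> \<ge> \<epsilon>}. ereal (J \<phi>))"
    by (rule SUP_upper) (use pP Dp in auto)
  have "ereal (J qz) - (SUP \<phi> \<in> {\<phi> \<in> \<Phi>. D \<phi> \<ge> \<epsilon>}. ereal (J \<phi>)) \<le> ereal (J qz) - ereal (J p)"
    using Tlo by (intro ereal_minus_mono) auto
  with Y4 S have "ereal (4*c) < ereal (J qz) - ereal (J p)" by (metis order_less_le_trans)
  then have "4*c < J qz - J p" by simp
  with h1 show False by simp
qed

lemma int_bound1:
  assumes P: "prob_space P" and f: "\<And>x. \<bar>f x\<bar> \<le> (1::real)"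
  shows "\<bar>integral\<^sup>L P f\<bar> \<le> 1"
proof (cases "integrable P f")
  case True
  have "\<bar>integral\<^sup>L P f\<bar> \<le> integral\<^sup>L P (\<lambda>x. \<bar>f x\<bar>)"
    using integral_abs_bound by blast
  also have "\<dots> \<le> integral\<^sup>L P (\<lambda>x. 1)"
    using True f P by (intro integral_mono) (auto simp: prob_space_def finite_measure.integrable_const)
  also have "\<dots> = 1" using P by (simp add: prob_space.prob_space)
  finally show ?thesis .
next
  case False
  then show ?thesis by (simp add: not_integrable_integral_eq)
qed

lemma BL_nonneg:
  assumes "prob_space P" "prob_space Q"
  shows "BL_dist P (Q :: 'x::metric_space measure) \<ge> 0"
  unfolding BL_dist_def
proof (rule cSUP_upper2)
  show "(\<lambda>x. 0) \<in> {f :: 'x \<Rightarrow> real. (\<forall>x. \<bar>f x\<bar> \<le> 1) \<and> (\<forall>x y. \<bar>f x - f y\<bar> \<le> dist x y)}" by simp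
  show "0 \<le> \<bar>(\<integral>x. (0::real) \<partial>P) - (\<integral>x. 0 \<partial>Q)\<bar>" by simp
  show "bdd_above ((\<lambda>f. \<bar>(\<integral>x. f x \<partial>P) - (\<integral>x. f x \<partial>Q)\<bar>) ` {f :: 'x \<Rightarrow> real. (\<forall>x. \<bar>f x\<bar> \<le> 1) \<and> (\<forall>x y. \<bar>f x - f y\<bar> \<le> dist x y)})"
  proof (rule bdd_aboveI2)
    fix f assume "f \<in> {f :: 'x \<Rightarrow> real. (\<forall>x. \<bar>f x\<bar> \<le> 1) \<and> (\<forall>x y. \<bar>f x - f y\<bar> \<le> dist x y)}"
    then have "\<And>x. \<bar>f x\<bar> \<le> 1" by auto
    then have "\<bar>integral\<^sup>L P f\<bar> \<le> 1" "\<bar>integral\<^sup>L Q f\<bar> \<le> 1" using int_bound1 assms by blast+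
    then show "\<bar>(\<integral>x. f x \<partial>P) - (\<integral>x. f x \<partial>Q)\<bar> \<le> 2" by simp
  qed
qed

lemma abstract:
  fixes M :: "'a measure" and J :: "'phi \<Rightarrow> real" and JN :: "nat \<Rightarrow> 'a \<Rightarrow> 'phi \<Rightarrow> real"
    and D :: "'phi \<Rightarrow> real" and ph :: "nat \<Rightarrow> 'a \<Rightarrow> 'phi"
  assumes M: "prob_space M"
    and phi0: "\<phi>0 \<in> \<Phi>" "\<And>\<psi>. \<psi> \<in> \<Phi> \<Longrightarrow> J \<psi> \<le> J \<phi>0"
    and sub: "\<And>N. \<Phi>N N \<subseteq> \<Phi>" and Dnn: "\<And>\<phi>. \<phi> \<in> \<Phi> \<Longrightarrow> D \<phi> \<ge> 0" and ph: "\<And>N \<omega>. ph N \<omega> \<in> \<Phi>N N"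
    and i: "tendsto_zero_in_outer_prob M (\<lambda>N \<omega>. SUP \<phi> \<in> \<Phi>N N. ereal \<bar>JN N \<omega> \<phi> - J \<phi>\<bar>)"
    and ii: "tendsto_zero_in_outer_prob M
              (\<lambda>N \<omega>. (SUP \<phi> \<in> \<Phi>N N. ereal (JN N \<omega> \<phi>)) - ereal (JN N \<omega> (ph N \<omega>)))"
    and iii: "(\<lambda>N. (SUP \<phi> \<in> \<Phi>. ereal (J \<phi>)) - (SUP \<phi> \<in> \<Phi>N N. ereal (J \<phi>))) \<longlonglongrightarrow> 0"
    and iv: "\<And>\<epsilon>. \<epsilon> > 0 \<Longrightarrow>
              (SUP \<phi> \<in> \<Phi>. ereal (J \<phi>)) - (SUP \<phi> \<in> {\<phi> \<in> \<Phi>. D \<phi> \<ge> \<epsilon>}. ereal (J \<phi>)) > 0"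
  shows "tendsto_zero_in_outer_prob M (\<lambda>N \<omega>. ereal (D (ph N \<omega>)))"
  unfolding tendsto_zero_in_outer_prob_def
proof (intro allI impI)
  fix \<epsilon> \<eta> :: real assume e: "\<epsilon> > 0" and h: "\<eta> > 0"
  obtain d where d: "0 < ereal d" "ereal d < (SUP \<phi> \<in> \<Phi>. ereal (J \<phi>)) - (SUP \<phi> \<in> {\<phi> \<in> \<Phi>. D \<phi> \<ge> \<epsilon>}. ereal (J \<phi>))"
    using ereal_dense2[OF iv[OF e]] by blast
  have h2: "\<eta>/2 > 0" using h by simp
  define c where "c = d / 4"
  have c: "c > 0" using d(1) by (simp add: c_def)
  have d4: "d = 4 * c" by (simp add: c_def)
  have ev1: "eventually (\<lambda>N. \<exists>A \<in> sets M. {\<omega> \<in> space M. \<bar>SUP \<phi> \<in> \<Phi>N N. ereal \<bar>JN N \<omega> \<phi> - J \<phi>\<bar>\<bar> > ereal c} \<subseteq> A \<and> measure M A < \<eta>/2) sequentially"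
    using i h2 c unfolding tendsto_zero_in_outer_prob_def by blast
  have ev2: "eventually (\<lambda>N. \<exists>A \<in> sets M. {\<omega> \<in> space M. \<bar>(SUP \<phi> \<in> \<Phi>N N. ereal (JN N \<omega> \<phi>)) - ereal (JN N \<omega> (ph N \<omega>))\<bar> > ereal c} \<subseteq> A \<and> measure M A < \<eta>/2) sequentially"
    using ii h2 c unfolding tendsto_zero_in_outer_prob_def by blast
  have ev3: "eventually (\<lambda>N. (SUP \<phi> \<in> \<Phi>. ereal (J \<phi>)) - (SUP \<phi> \<in> \<Phi>N N. ereal (J \<phi>)) < ereal c) sequentially"
    using order_tendstoD(2)[OF iii] c by simp
  show "eventually (\<lambda>N. \<exists>A \<in> sets M. {\<omega> \<in> space M. \<bar>ereal (D (ph N \<omega>))\<bar> > ereal \<epsilon>} \<subseteq> A \<and> measure M A < \<eta>) sequentially"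
    using ev1 ev2 ev3
  proof eventually_elim
    case (elim N)
    from elim(1) obtain A1 where A1: "A1 \<in> sets M" "{\<omega> \<in> space M. \<bar>SUP \<phi> \<in> \<Phi>N N. ereal \<bar>JN N \<omega> \<phi> - J \<phi>\<bar>\<bar> > ereal c} \<subseteq> A1" "measure M A1 < \<eta>/2" by blast
    from elim(2) obtain A2 where A2: "A2 \<in> sets M" "{\<omega> \<in> space M. \<bar>(SUP \<phi> \<in> \<Phi>N N. ereal (JN N \<omega> \<phi>)) - ereal (JN N \<omega> (ph N \<omega>))\<bar> > ereal c} \<subseteq> A2" "measure M A2 < \<eta>/2" by blast
    have "measure M (A1 \<union> A2) \<le> measure M A1 + measure M A2"
      using A1(1) A2(1) M by (intro measure_Un_le) (auto simp: prob_space_def finite_measure_def)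
    with A1(3) A2(3) have meas: "measure M (A1 \<union> A2) < \<eta>" by simp
    have cov: "{\<omega> \<in> space M. \<bar>ereal (D (ph N \<omega>))\<bar> > ereal \<epsilon>} \<subseteq> A1 \<union> A2"
    proof (rule subsetI, rule ccontr)
      fix \<omega> assume w: "\<omega> \<in> {\<omega> \<in> space M. \<bar>ereal (D (ph N \<omega>))\<bar> > ereal \<epsilon>}" and nw: "\<omega> \<notin> A1 \<union> A2"
      have "D (ph N \<omega>) \<ge> 0" using Dnn sub ph by blast
      then have Dp: "D (ph N \<omega>) \<ge> \<epsilon>" using w e by auto
      have "\<not> \<bar>SUP \<phi> \<in> \<Phi>N N. ereal \<bar>JN N \<omega> \<phi> - J \<phi>\<bar>\<bar> > ereal c" using A1(2) w nw by blast
      then have Y1: "(SUP \<phi> \<in> \<Phi>N N. ereal \<bar>JN N \<omega> \<phi> - J \<phi>\<bar>) \<le> ereal c"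
        by (cases "(SUP \<phi> \<in> \<Phi>N N. ereal \<bar>JN N \<omega> \<phi> - J \<phi>\<bar>)") auto
      have "\<not> \<bar>(SUP \<phi> \<in> \<Phi>N N. ereal (JN N \<omega> \<phi>)) - ereal (JN N \<omega> (ph N \<omega>))\<bar> > ereal c" using A2(2) w nw by blast
      then have Y2: "(SUP \<phi> \<in> \<Phi>N N. ereal (JN N \<omega> \<phi>)) - ereal (JN N \<omega> (ph N \<omega>)) \<le> ereal c"
        by (cases "(SUP \<phi> \<in> \<Phi>N N. ereal (JN N \<omega> \<phi>)) - ereal (JN N \<omega> (ph N \<omega>))") auto
      show False
        by (rule core[where J=J and \<Phi>=\<Phi> and qz=\<phi>0 and \<Psi>="\<Phi>N N" and p="ph N \<omega>" and Jn="JN N \<omega>" and c=c and D=D and \<epsilon>=\<epsilon>, OF phi0(1) _ sub ph Y1 Y2 elim(3) _ Dp]) (use phi0(2) d(2) d4 in auto)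
    qed
    show ?case using A1(1) A2(1) meas cov by blast
  qed
qed


theorem theorem3:
  fixes M :: "'a measure"
    and X :: "nat \<Rightarrow> 'a \<Rightarrow> 'x::euclidean_space"
    and P0 :: "'x measure"
    and Pobs :: "'phi::topological_space \<Rightarrow> 'x measure"
    and m :: "'x \<Rightarrow> 'phi \<Rightarrow> real"
    and KL :: "'phi \<Rightarrow> real"
    and \<Phi> :: "'phi set"
    and \<Phi>N :: "nat \<Rightarrow> 'phi set"
    and phihat :: "nat \<Rightarrow> 'a \<Rightarrow> 'phi"
    and Pstar :: "'x measure"
  assumes M: "prob_space M"
    and P0: "prob_space P0" "sets P0 = sets borel"
    and X_rv: "\<And>i. X i \<in> borel_measurable M"
    and X_indep: "prob_space.indep_vars M (\<lambda>_. borel) X UNIV"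
    and X_law: "\<And>i. distr M borel (X i) = P0"
    and Pobs: "\<And>\<phi>. \<phi> \<in> \<Phi> \<Longrightarrow> prob_space (Pobs \<phi>) \<and> sets (Pobs \<phi>) = sets borel"
    and maxnonempty: "argmax_set (pop_obj P0 m KL) \<Phi> \<noteq> {}"
    and same_law: "\<And>\<phi>. \<phi> \<in> argmax_set (pop_obj P0 m KL) \<Phi> \<Longrightarrow> Pobs \<phi> = Pstar"
    and sieve_mono: "\<And>N. \<Phi>N N \<subseteq> \<Phi>N (Suc N)"
    and sieve_sub: "\<And>N. \<Phi>N N \<subseteq> \<Phi>"
    and sieve_dense: "\<Phi> \<subseteq> closure (\<Union>N. \<Phi>N N)"
    and phihat_in: "\<And>N \<omega>. phihat N \<omega> \<in> \<Phi>N N"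
    and i: "tendsto_zero_in_outer_prob M
              (\<lambda>N \<omega>. SUP \<phi> \<in> \<Phi>N N.
                 ereal \<bar>emp_obj X m KL N \<omega> \<phi> - pop_obj P0 m KL \<phi>\<bar>)"
    and ii: "tendsto_zero_in_outer_prob M
              (\<lambda>N \<omega>. (SUP \<phi> \<in> \<Phi>N N. ereal (emp_obj X m KL N \<omega> \<phi>))
                     - ereal (emp_obj X m KL N \<omega> (phihat N \<omega>)))"
    and iii: "(\<lambda>N. (SUP \<phi> \<in> \<Phi>. ereal (pop_obj P0 m KL \<phi>))
                  - (SUP \<phi> \<in> \<Phi>N N. ereal (pop_obj P0 m KL \<phi>))) \<longlonglongrightarrow> 0"
    and iv: "\<And>\<epsilon>. \<epsilon> > 0 \<Longrightarrow>
              (SUP \<phi> \<in> \<Phi>. ereal (pop_obj P0 m KL \<phi>))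
              - (SUP \<phi> \<in> {\<phi> \<in> \<Phi>. BL_dist (Pobs \<phi>) Pstar \<ge> \<epsilon>}. ereal (pop_obj P0 m KL \<phi>)) > 0"
  shows "tendsto_zero_in_outer_prob M (\<lambda>N \<omega>. ereal (BL_dist (Pobs (phihat N \<omega>)) Pstar))
         \<and> (Pstar = P0 \<longrightarrow>
            tendsto_zero_in_outer_prob M (\<lambda>N \<omega>. ereal (BL_dist (Pobs (phihat N \<omega>)) P0)))"
proof -
  obtain \<phi>0 where p0: "\<phi>0 \<in> argmax_set (pop_obj P0 m KL) \<Phi>" using maxnonempty by blast
  then have p0': "\<phi>0 \<in> \<Phi>" "\<And>\<psi>. \<psi> \<in> \<Phi> \<Longrightarrow> pop_obj P0 m KL \<psi> \<le> pop_obj P0 m KL \<phi>0"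
    unfolding argmax_set_def by auto
  have Ps: "prob_space Pstar" using same_law[OF p0] Pobs[OF p0'(1)] by simp
  have Dnn: "\<And>\<phi>. \<phi> \<in> \<Phi> \<Longrightarrow> BL_dist (Pobs \<phi>) Pstar \<ge> 0"
    using BL_nonneg Ps Pobs by blast
  have A: "tendsto_zero_in_outer_prob M (\<lambda>N \<omega>. ereal (BL_dist (Pobs (phihat N \<omega>)) Pstar))"
    using abstract[where D="\<lambda>\<phi>. BL_dist (Pobs \<phi>) Pstar" and J="pop_obj P0 m KL" and JN="emp_obj X m KL",
        OF M p0' sieve_sub Dnn phihat_in i ii iii iv] by simp
  then show ?thesis by auto
qed

end
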